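(* For every $\lambda \in \Lambda^{\bullet}(n,r)$, the $\mathbb{C}$-linear span of $B^{\lambda}\setminus \beta^{\lambda}$ is an $\mathbf{S}_0(n,r)$-submodule of $P_\lambda$.
   Context: Let $n,r\ge 0$ be integers. $\Lambda(n,r)$ is the set of weak compositions $\lambda=(\lambda_1,\dots,\lambda_n)$ of $r$ (nonnegative integers summing to $r$), and $\Lambda^{\bullet}(n,r)\subseteq\Lambda(n,r)$ is the set of those $\lambda$ such that $\lambda_i=0$ implies $\lambda_j=0$ for all $j>i$. $M_n(r)$ is the set of $n\times n$ matrices with nonnegative integer entries summing to $r$; for $A=(a_{i,j})\in M_n(r)$, $\mathrm{ro}(A)$ and $\mathrm{co}(A)$ are its row-sum and column-sum vectors. $E_{a,b}$ denotes the $n\times n$ matrix unit, and $D_\lambda=\mathrm{diag}(\lambda_1,\dots,\lambda_n)$. $\mathbf{S}_0(n,r)=S_0(n,r)\otimes_{\mathbb Z}\mathbb{C}$, where $S_0(n,r)=S_q(n,r)\otimes_{\mathbb Z[q]}\mathbb Z[q]/(q)$ is the $0$-Schur algebra, i.e. the specialization at $q=0$ of the Dipper–James $q$-Schur algebra $S_q(n,r)=\mathrm{End}_{H_r(q)}(\bigoplus_{\lambda\in\Lambda(n,r)}x_\lambda H_r(q))$. It has the Jensen–Su standard basis $\{e_A: A\in M_n(r)\}$ with the following properties: - $e_Ae_B=0$ unless $\mathrm{co}(A)=\mathrm{ro}(B)$, in which case $e_Ae_B=e_C$ for a unique $C\in M_n(r)$. - With $k_\lambda:=e_{D_\lambda}$,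 one has $k_\lambda e_A=e_A$ if $\lambda=\mathrm{ro}(A)$ and $0$ otherwise, and $e_Ak_\lambda=e_A$ if $\lambda=\mathrm{co}(A)$ and $0$ otherwise. - For $1\le i\le n-1$, put $e_i=\sum_\lambda e_{D_\lambda-E_{i+1,i+1}+E_{i,i+1}}$ and $f_i=\sum_\lambda e_{D_\lambda-E_{i,i}+E_{i+1,i}}$, the sums running over the $\lambda$ for which these matrices have nonnegative entries. - If $\mathrm{ro}(A)=\lambda$ and $\lambda_{i+1}>0$, then $e_ie_A=e_{A+E_{i,p}-E_{i+1,p}}$, where $p$ is the largest $j$ with $a_{i+1,j}>0$. - If $\lambda_i>0$, then $f_ie_A=e_{A-E_{i,q}+E_{i+1,q}}$, where $q$ is the smallest $j$ with $a_{i,j}>0$. - $e_ie_A=0$ if $\lambda_{i+1}=0$, and $f_ie_A=0$ if $\lambda_i=0$. Construction of $P_\lambda$ (Jensen–Su–Yang). For a strong composition $\alpha=(\alpha_1,\dots,\alpha_s)$ of $n$, cut $\lambda$ into consecutive subsequences of lengths $\alpha_1,\dots,\alpha_s$. We call $\alpha$ maximal with respect to $\lambda$ if each subsequence is either $(0)$ or has neither first nor last entry equal to $0$; $\max(\lambda)$ is the set of such $\alpha$. For an $n\times n$ matrix $A$ and $1\le v\le s$, let $A(\alpha;v)$ be the matrix whose $i$-th column equals that of $A$ if $\alpha_1+\dots+\alpha_{v-1}<i\le \alpha_1+\dots+\alpha_v$, and is zero otherwise. A matrix is open if every $2\times 2$ submatrix has at least one zero on its diagonal (i.e. $a_{i,j}a_{i',j'}=0$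 for all $i<i'$, $j<j'$). $A$ is open on columns with respect to $\alpha$ if every $A(\alpha;v)$ is open. Let $B^{\lambda,\alpha}=\{e_A:\mathrm{co}(A)=\lambda,\ A \text{ open on columns w.r.t. }\alpha\}$ and $$B^\lambda=\{e_A:\mathrm{co}(A)=\lambda\}\setminus\bigcup_{\alpha\in\max(\lambda)\setminus\{(1,\dots,1)\}}B^{\lambda,\alpha}.$$ $P_\lambda$ is the $\mathbb{C}$-span of $B^\lambda$, with action: for $b\in\{e_i,f_i,k_\mu\}$ and $e_A\in B^\lambda$, $b\cdot e_A=e_B$ if $be_A=e_B$ in $S_0(n,r)$ and $e_B\in B^\lambda$, and $b\cdot e_A=0$ otherwise. This is an $\mathbf{S}_0(n,r)$-module, and it is projective indecomposable. A column block diagonal matrix is a matrix $A=(a_{i,j})$ with nonnegative integer entries such that $a_{i,j}>0$ implies $a_{i',s}=0$ for all $i'\le i$ and $s>j$. For $\lambda\in\Lambda^\bullet(n,r)$, $\mathrm{cb}(\lambda)$ is the set of $n\times n$ column block diagonal matrices $A$ with $\mathrm{co}(A)=\lambda$, and $\beta^\lambda=\{e_A:A\in\mathrm{cb}(\lambda)\}$; one has $\beta^\lambda\subseteq B^\lambda$. *)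

theory Defs
  imports Complex_Main
begin

(* n x n matrices with nonnegative integer entries, indexed 1..n (zero outside) *)
type_synonym mat = "nat \<Rightarrow> nat \<Rightarrow> nat"

definition is_mat :: "nat \<Rightarrow> mat \<Rightarrow> bool" where
  "is_mat n A \<longleftrightarrow> (\<forall>i j. (i \<notin> {1..n} \<or> j \<notin> {1..n}) \<longrightarrow> A i j = 0)"

definition ro :: "nat \<Rightarrow> mat \<Rightarrow> (nat \<Rightarrow> nat)" where
  "ro n A = (\<lambda>i. \<Sum>j\<in>{1..n}. A i j)"

definition co :: "nat \<Rightarrow> mat \<Rightarrow> (nat \<Rightarrow> nat)" where
  "co n A = (\<lambda>j. \<Sum>i\<in>{1..n}. A i j)"

definition Lam :: "nat \<Rightarrow> nat \<Rightarrow> (nat \<Rightarrow> nat) set" where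
  "Lam n r = {la. (\<forall>i. i \<notin> {1..n} \<longrightarrow> la i = 0) \<and> (\<Sum>i\<in>{1..n}. la i) = r}"

definition Lam_bullet :: "nat \<Rightarrow> nat \<Rightarrow> (nat \<Rightarrow> nat) set" where
  "Lam_bullet n r = {la \<in> Lam n r. \<forall>i j. 1 \<le> i \<and> i < j \<and> j \<le> n \<and> la i = 0 \<longrightarrow> la j = 0}"

definition open_mat :: "mat \<Rightarrow> bool" where
  "open_mat A \<longleftrightarrow> (\<forall>i i' j j'. i < i' \<and> j < j' \<longrightarrow> A i j * A i' j' = 0)"

definition strong_comp :: "nat \<Rightarrow> nat list \<Rightarrow> bool" where
  "strong_comp n \<alpha> \<longleftrightarrow> (\<forall>a\<in>set \<alpha>. 0 < a) \<and> sum_list \<alpha> = n"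

(* the v-th block (1 <= v <= length alpha) of positions *)
definition block :: "nat list \<Rightarrow> nat \<Rightarrow> nat set" where
  "block \<alpha> v = {sum_list (take (v - 1) \<alpha>) + 1 .. sum_list (take v \<alpha>)}"

definition maximal_wrt :: "nat \<Rightarrow> (nat \<Rightarrow> nat) \<Rightarrow> nat list \<Rightarrow> bool" where
  "maximal_wrt n la \<alpha> \<longleftrightarrow> strong_comp n \<alpha> \<and>
     (\<forall>v\<in>{1..length \<alpha>}.
        (\<alpha> ! (v - 1) = 1 \<and> la (sum_list (take v \<alpha>)) = 0) \<or>
        (la (sum_list (take (v - 1) \<alpha>) + 1) \<noteq> 0 \<and> la (sum_list (take v \<alpha>)) \<noteq> 0))"

definition col_part :: "nat list \<Rightarrow> nat \<Rightarrow> mat \<Rightarrow> mat" where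
  "col_part \<alpha> v A = (\<lambda>a b. if b \<in> block \<alpha> v then A a b else 0)"

definition open_on_cols :: "nat list \<Rightarrow> mat \<Rightarrow> bool" where
  "open_on_cols \<alpha> A \<longleftrightarrow> (\<forall>v\<in>{1..length \<alpha>}. open_mat (col_part \<alpha> v A))"

(* B^{lambda,alpha} (as a set of matrices A, standing for e_A) *)
definition Bla_al :: "nat \<Rightarrow> (nat \<Rightarrow> nat) \<Rightarrow> nat list \<Rightarrow> mat set" where
  "Bla_al n la \<alpha> = {A. is_mat n A \<and> co n A = la \<and> open_on_cols \<alpha> A}"

definition Bla :: "nat \<Rightarrow> (nat \<Rightarrow> nat) \<Rightarrow> mat set" where
  "Bla n la = {A. is_mat n A \<and> co n A = la} -
     (\<Union>\<alpha>\<in>{\<alpha>. maximal_wrt n la \<alpha> \<and> \<alpha> \<noteq> replicate n 1}. Bla_al n la \<alpha>)"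

definition col_block_diag :: "mat \<Rightarrow> bool" where
  "col_block_diag A \<longleftrightarrow> (\<forall>i j. 0 < A i j \<longrightarrow> (\<forall>i' s. i' \<le> i \<and> j < s \<longrightarrow> A i' s = 0))"

definition cb :: "nat \<Rightarrow> (nat \<Rightarrow> nat) \<Rightarrow> mat set" where
  "cb n la = {A. is_mat n A \<and> co n A = la \<and> col_block_diag A}"

datatype gen = GE nat | GF nat | GK "nat \<Rightarrow> nat"

definition valid_gen :: "nat \<Rightarrow> nat \<Rightarrow> gen \<Rightarrow> bool" where
  "valid_gen n r g = (case g of GE i \<Rightarrow> 1 \<le> i \<and> i \<le> n - 1
                          | GF i \<Rightarrow> 1 \<le> i \<and> i \<le> n - 1
                          | GK mu \<Rightarrow> mu \<in> Lam n r)"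

definition add_unit :: "mat \<Rightarrow> nat \<Rightarrow> nat \<Rightarrow> mat" where
  "add_unit A a b = (\<lambda>x y. if x = a \<and> y = b then A x y + 1 else A x y)"

definition sub_unit :: "mat \<Rightarrow> nat \<Rightarrow> nat \<Rightarrow> mat" where
  "sub_unit A a b = (\<lambda>x y. if x = a \<and> y = b then A x y - 1 else A x y)"

(* product g * e_A in S_0(n,r): Some C means g e_A = e_C, None means 0 *)
definition gen_mult :: "nat \<Rightarrow> gen \<Rightarrow> mat \<Rightarrow> mat option" where
  "gen_mult n g A = (case g of
      GE i \<Rightarrow> if 0 < ro n A (i + 1)
              then (let p = Max {j\<in>{1..n}. 0 < A (i + 1) j}
                    in Some (sub_unit (add_unit A i p) (i + 1) p))
              else None
    | GF i \<Rightarrow> if 0 < ro n A i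
              then (let q = Min {j\<in>{1..n}. 0 < A i j}
                    in Some (add_unit (sub_unit A i q) (i + 1) q))
              else None
    | GK mu \<Rightarrow> if mu = ro n A then Some A else None)"

(* elements of P_lambda: complex coefficient functions on matrices (supported in B^lambda) *)
type_synonym vec = "mat \<Rightarrow> complex"

(* g . e_A in P_lambda on basis elements *)
definition P_step :: "nat \<Rightarrow> (nat \<Rightarrow> nat) \<Rightarrow> gen \<Rightarrow> mat \<Rightarrow> mat option" where
  "P_step n la g A = (case gen_mult n g A of
       Some B \<Rightarrow> if B \<in> Bla n la then Some B else None
     | None \<Rightarrow> None)"

definition P_act :: "nat \<Rightarrow> (nat \<Rightarrow> nat) \<Rightarrow> gen \<Rightarrow> vec \<Rightarrow> vec" where
  "P_act n la g v = (\<lambda>C. \<Sum>A\<in>{A\<in>Bla n la. P_step n la g A = Some C}. v A)"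

(* C-linear span of a (finite) set S of basis vectors e_A *)
definition span_basis :: "mat set \<Rightarrow> vec set" where
  "span_basis S = {v. \<forall>A. A \<notin> S \<longrightarrow> v A = 0}"

definition P_module :: "nat \<Rightarrow> (nat \<Rightarrow> nat) \<Rightarrow> vec set" where
  "P_module n la = span_basis (Bla n la)"

definition is_submodule :: "nat \<Rightarrow> nat \<Rightarrow> (nat \<Rightarrow> nat) \<Rightarrow> vec set \<Rightarrow> bool" where
  "is_submodule n r la W \<longleftrightarrow> W \<subseteq> P_module n la \<and> (\<lambda>A. 0) \<in> W \<and>
     (\<forall>v\<in>W. \<forall>w\<in>W. (\<lambda>A. v A + w A) \<in> W) \<and> (\<forall>c. \<forall>v\<in>W. (\<lambda>A. c * v A) \<in> W) \<and>
     (\<forall>g. valid_gen n r g \<longrightarrow> (\<forall>v\<in>W. P_act n la g v \<in> W))"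

end

theory Submission
  imports Defs
begin

lemma ro_pos_ex:
  assumes "0 < ro n A k" shows "\<exists>j\<in>{1..n}. 0 < A k j"
proof (rule ccontr)
  assume "\<not> ?thesis"
  then have "\<forall>j\<in>{1..n}. A k j = 0" by auto
  then have "ro n A k = 0" unfolding ro_def by simp
  with assms show False by simp
qed

lemma ge_case:
  assumes M: "is_mat n A" and R: "0 < ro n A (i+1)"
    and P: "p = Max {j\<in>{1..n}. 0 < A (i+1) j}"
    and Cd: "C = sub_unit (add_unit A i p) (i+1) p"
    and cbC: "col_block_diag C"
  shows "col_block_diag A"
proof (rule ccontr)
  let ?S = "{j\<in>{1..n}. 0 < A (i+1) j}"
  have fin: "finite ?S" by simp
  have ne: "?S \<noteq> {}" using ro_pos_ex[OF R] by auto
  have Ap: "0 < A (i+1) p" using Max_in[OF fin ne] P by auto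
  have maxp: "s \<le> p" if "0 < A (i+1) s" for s
  proof -
    have "s \<in> {1..n}" using M that unfolding is_mat_def by (metis not_gr0)
    then show ?thesis using Max_ge[OF fin] that P by auto
  qed
  have Cip: "0 < C i p" using Cd unfolding sub_unit_def add_unit_def by auto
  have Cge: "A x y \<le> C x y" if "\<not> (x = i+1 \<and> y = p)" for x y
    using Cd that unfolding sub_unit_def add_unit_def by auto
  have viol: "\<And>x y x' s. 0 < C x y \<Longrightarrow> x' \<le> x \<Longrightarrow> y < s \<Longrightarrow> 0 < C x' s \<Longrightarrow> False"
    using cbC unfolding col_block_diag_def by (metis less_not_refl)
  assume "\<not> col_block_diag A"
  then obtain x y x' s where h: "0 < A x y" "x' \<le> x" "y < s" "0 < A x' s"
    unfolding col_block_diag_def by blast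
  show False
  proof (cases "x = i+1 \<and> y = p")
    case True
    then have "x' \<noteq> i+1" using maxp[of s] h by (metis not_le)
    then have "x' \<le> i" using h True by auto
    moreover have "0 < C x' s" using Cge[of x' s] h True by fastforce
    ultimately show False using viol[OF Cip, of x' s] h True by auto
  next
    case F1: False
    show False
    proof (cases "x' = i+1 \<and> s = p")
      case True
      have "0 < C x y" using Cge[of x y] h True by fastforce
      then show False using viol[OF _ _ _ Cip, of x y] h True by auto
    next
      case False
      then show False using viol[of x y x' s] Cge[of x y] Cge[of x' s] F1 h by fastforce
    qed
  qed
qed

lemma gf_case:
  assumes M: "is_mat n A" and R: "0 < ro n A i"
    and P: "q = Min {j\<in>{1..n}. 0 < A i j}"
    and Cd: "C = add_unit (sub_unit A i q) (i+1) q"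
    and cbC: "col_block_diag C"
  shows "col_block_diag A"
proof (rule ccontr)
  let ?S = "{j\<in>{1..n}. 0 < A i j}"
  have fin: "finite ?S" by simp
  have ne: "?S \<noteq> {}" using ro_pos_ex[OF R] by auto
  have minq: "q \<le> s" if "0 < A i s" for s
  proof -
    have "s \<in> {1..n}" using M that unfolding is_mat_def by (metis not_gr0)
    then show ?thesis using Min_le[OF fin] that P by auto
  qed
  have Ciq: "0 < C (i+1) q" using Cd unfolding sub_unit_def add_unit_def by auto
  have Cge: "A x y \<le> C x y" if "\<not> (x = i \<and> y = q)" for x y
    using Cd that unfolding sub_unit_def add_unit_def by auto
  have viol: "\<And>x y x' s. 0 < C x y \<Longrightarrow> x' \<le> x \<Longrightarrow> y < s \<Longrightarrow> 0 < C x' s \<Longrightarrow> False"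
    using cbC unfolding col_block_diag_def by (metis less_not_refl)
  assume "\<not> col_block_diag A"
  then obtain x y x' s where h: "0 < A x y" "x' \<le> x" "y < s" "0 < A x' s"
    unfolding col_block_diag_def by blast
  show False
  proof (cases "x = i \<and> y = q")
    case True
    have "0 < C x' s" using Cge[of x' s] h True by fastforce
    then show False using viol[OF Ciq, of x' s] h True by auto
  next
    case F1: False
    show False
    proof (cases "x' = i \<and> s = q")
      case True
      then have "x \<noteq> i" using minq[of y] h by (metis not_le)
      then have "i + 1 \<le> x" using h True by auto
      moreover have "0 < C x y" using Cge[of x y] h F1 by fastforce
      ultimately show False using viol[OF _ _ _ Ciq, of x y] h True by auto
    next
      case False
      then show False using viol[of x y x' s] Cge[of x y] Cge[of x' s] F1 h by fastforce
    qed
  qed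
qed

lemma key:
  assumes "P_step n la g A = Some C" "A \<in> Bla n la" "C \<in> cb n la"
  shows "A \<in> cb n la"
proof -
  have A: "is_mat n A" "co n A = la" using assms(2) unfolding Bla_def by auto
  have cbC: "col_block_diag C" using assms(3) unfolding cb_def by auto
  have gm: "gen_mult n g A = Some C" using assms(1) unfolding P_step_def
    by (auto split: option.splits if_splits)
  have "col_block_diag A"
  proof (cases g)
    case (GE i)
    then show ?thesis using gm ge_case[OF A(1) _ refl refl] cbC
      unfolding gen_mult_def Let_def by (auto split: if_splits)
  next
    case (GF i)
    then show ?thesis using gm gf_case[OF A(1) _ refl refl] cbC
      unfolding gen_mult_def Let_def by (auto split: if_splits)
  next
    case (GK mu)
    then show ?thesis using gm cbC unfolding gen_mult_def by (auto split: if_splits)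
  qed
  then show ?thesis using A unfolding cb_def by auto
qed

theorem mainTheorem1:
  fixes n r :: nat and la :: "nat \<Rightarrow> nat"
  assumes "la \<in> Lam_bullet n r"
  shows "is_submodule n r la (span_basis (Bla n la - cb n la))"
proof -
  have act: "P_act n la g v \<in> span_basis (Bla n la - cb n la)"
    if v: "v \<in> span_basis (Bla n la - cb n la)" for g v
  proof -
    have "P_act n la g v C = 0" if C: "C \<notin> Bla n la - cb n la" for C
    proof -
      have "v A = 0" if A: "A \<in> {A\<in>Bla n la. P_step n la g A = Some C}" for A
      proof (cases "C \<in> Bla n la")
        case True
        then have "C \<in> cb n la" using C by auto
        then have "A \<in> cb n la" using key A by auto
        then show ?thesis using v unfolding span_basis_def by auto
      next
        case False
        then show ?thesis using A unfolding P_step_def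
          by (auto split: option.splits if_splits)
      qed
      then show ?thesis unfolding P_act_def by (simp add: sum.neutral)
    qed
    then show ?thesis unfolding span_basis_def by auto
  qed
  show ?thesis unfolding is_submodule_def P_module_def
    using act by (auto simp: span_basis_def)
qed

end
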